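(* Let $\sigma=(a_1,\ldots,a_s)$ be a partition of $r$ with $d=\gcd(a_1,\ldots,a_s)\ge2$, let $q=md+t$ with $0\le t\le d-1$, and let $H=H(n,r,q\mid\sigma)$. Let $H_m=H(n,r,md\mid\sigma)$, viewed as obtained from $H$ by deleting the top $t$ vertices of every class. Let $\sigma^*=(a_1/d,\ldots,a_s/d)$, a partition of $r/d$, and $H^*=H(n,r/d,m\mid\sigma^* )$. Then: (1) for every maximum matching $M$ of $H$ there is a matching $M^*$ of $H^*$ with $|M^*|=|M|$; (2) for every maximum matching $M^*$ of $H^*$ there is a matching $M$ of $H$ with $|M|=|M^*|$; (3) consequently $\nu(H)=\nu(H_m)=\nu(H^* )$.
   Context: A $\sigma$-hypergraph $H=H(n,r,q\mid\sigma)$, for a partition $\sigma$ of $r$, is the $r$-uniform hypergraph whose vertex set is the disjoint union of $n$ classes $V_1,\ldots,V_n$, each of size $q$; an $r$-subset $K$ of vertices is an edge iff the multiset of non-zero values $|K\cap V_i|$ equals $\sigma$. The vertices of each class are ordered $v_{1,i},\ldots,v_{q,i}$, and the top $t$ vertices of $V_i$ are $v_{1,i},\ldots,v_{t,i}$. A matching is a set of pairwise vertex-disjoint edges; $\nu(\cdot)$ denotes the maximum size of a matching. *)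

theory Defs
  imports Main "HOL-Library.Multiset" "HOL-Library.Disjoint_Sets"
begin

definition is_partition :: "nat multiset \<Rightarrow> nat \<Rightarrow> bool" where
  "is_partition \<sigma> r \<longleftrightarrow> (\<forall>a\<in>#\<sigma>. a > 0) \<and> sum_mset \<sigma> = r"

text \<open>Vertices of H(n,r,q|sigma): pair (i, j) is the vertex v_{j+1,i+1}, i.e. class i < n,
  position j < q within the class (position 0 is the top vertex).\<close>
definition sclass :: "nat \<Rightarrow> nat \<Rightarrow> (nat \<times> nat) set" where
  "sclass q i = {i} \<times> {..<q}"

definition sverts :: "nat \<Rightarrow> nat \<Rightarrow> (nat \<times> nat) set" where
  "sverts n q = {..<n} \<times> {..<q}"

definition profile :: "nat \<Rightarrow> nat \<Rightarrow> (nat \<times> nat) set \<Rightarrow> nat multiset" where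
  "profile n q K = filter_mset (\<lambda>k. k \<noteq> 0)
      (image_mset (\<lambda>i. card (K \<inter> sclass q i)) (mset_set {..<n}))"

definition sigma_hg :: "nat \<Rightarrow> nat \<Rightarrow> nat \<Rightarrow> nat multiset \<Rightarrow> (nat \<times> nat) set set" where
  "sigma_hg n r q \<sigma> = {K. K \<subseteq> sverts n q \<and> card K = r \<and> profile n q K = \<sigma>}"

definition matching :: "'v set set \<Rightarrow> 'v set set \<Rightarrow> bool" where
  "matching E M \<longleftrightarrow> M \<subseteq> E \<and> disjoint M"

definition max_matching :: "'v set set \<Rightarrow> 'v set set \<Rightarrow> bool" where
  "max_matching E M \<longleftrightarrow> matching E M \<and> (\<forall>M'. matching E M' \<longrightarrow> card M' \<le> card M)"

definition nu :: "'v set set \<Rightarrow> nat" where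
  "nu E = Max (card ` {M. matching E M})"

end

theory Submission imports Defs begin

lemma sum_filter_nz: "sum_mset (filter_mset (\<lambda>k. k \<noteq> 0) (X::nat multiset)) = sum_mset X"
  by (induction X) auto

lemma filter_div: assumes "d > (0::nat)" "\<forall>i\<in>#A. d dvd x i"
  shows "filter_mset (\<lambda>k. k\<noteq>0) (image_mset (\<lambda>i. x i div d) A)
       = image_mset (\<lambda>k. k div d) (filter_mset (\<lambda>k. k\<noteq>0) (image_mset x A))"
  using assms(2)
proof (induction A)
  case empty then show ?case by simp
next
  case (add a A)
  then show ?case using assms(1) by (auto elim!: dvdE)
qed

lemma filter_mult: assumes "d > (0::nat)"
  shows "filter_mset (\<lambda>k. k\<noteq>0) (image_mset (\<lambda>i. d * y i) A)
       = image_mset (\<lambda>k. d * k) (filter_mset (\<lambda>k. k\<noteq>0) (image_mset y A))"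
  by (induction A) (use assms in auto)

lemma sum_div: assumes "d > (0::nat)" "\<forall>a\<in>#S. d dvd a"
  shows "sum_mset (image_mset (\<lambda>a. a div d) S) = sum_mset S div d"
  using assms(2)
proof (induction S)
  case empty then show ?case by simp
next
  case (add a S)
  then show ?case using assms(1) by (auto simp: div_plus_div_distrib_dvd_left)
qed

lemma card_profile:
  assumes "K \<subseteq> sverts n q"
  shows "card K = sum_mset (profile n q K)"
proof -
  have fin: "finite K" using assms finite_subset unfolding sverts_def by blast
  have "K = (\<Union>i\<in>{..<n}. K \<inter> sclass q i)" using assms unfolding sverts_def sclass_def by auto
  then have "card K = card (\<Union>i\<in>{..<n}. K \<inter> sclass q i)" by simp
  also have "\<dots> = (\<Sum>i<n. card (K \<inter> sclass q i))"
    by (rule card_UN_disjoint) (use fin in \<open>auto simp: sclass_def\<close>)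
  also have "\<dots> = sum_mset (profile n q K)"
    unfolding profile_def sum_filter_nz by (simp add: sum_unfold_sum_mset)
  finally show ?thesis .
qed

lemma matching_insert: "matching E (insert K M) \<Longrightarrow> matching E M"
  unfolding matching_def by (auto intro: pairwise_subset)

lemma fin_hg: "finite (sigma_hg n r q \<sigma>)"
proof -
  have "sigma_hg n r q \<sigma> \<subseteq> Pow (sverts n q)" unfolding sigma_hg_def by auto
  moreover have "finite (sverts n q)" unfolding sverts_def by auto
  ultimately show ?thesis by (meson finite_Pow_iff finite_subset)
qed

lemma dvd_cls:
  assumes "K \<in> sigma_hg n r q \<sigma>" "\<forall>a\<in>#\<sigma>. d dvd a"
  shows "d dvd card (K \<inter> sclass q i)"
proof (cases "i < n \<and> card (K \<inter> sclass q i) \<noteq> 0")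
  case True
  then have "card (K \<inter> sclass q i) \<in># profile n q K" unfolding profile_def by auto
  then show ?thesis using assms unfolding sigma_hg_def by auto
next
  case False
  moreover have "i \<ge> n \<Longrightarrow> K \<inter> sclass q i = {}" using assms(1)
    unfolding sigma_hg_def sverts_def sclass_def by auto
  ultimately show ?thesis by (metis card.empty dvd_0_right not_le)
qed


lemma matching_insertI:
  assumes "matching E M" "K \<in> E" "\<forall>K'\<in>M. K \<inter> K' = {}"
  shows "matching E (insert K M)"
  using assms unfolding matching_def pairwise_insert disjnt_def by (auto simp: Int_commute)

lemma matching_disj:
  assumes "matching E (insert K M)" "K \<notin> M"
  shows "K \<inter> \<Union>M = {}"
  using assms unfolding matching_def pairwise_insert disjnt_def by auto

lemma partA:
  assumes dpos: "d > 0" and dv: "\<forall>a\<in>#\<sigma>. d dvd a" and qb: "q < Suc m * d"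
    and rpos: "r div d > 0" and rs: "sum_mset \<sigma> = r"
    and mM: "matching (sigma_hg n r q \<sigma>) M"
  shows "\<exists>Ms. matching (sigma_hg n (r div d) m (image_mset (\<lambda>a. a div d) \<sigma>)) Ms
           \<and> card Ms = card M
           \<and> (\<forall>K'\<in>Ms. \<forall>(i,j)\<in>K'. j < card (\<Union>M \<inter> sclass q i) div d)"
proof -
  let ?H = "sigma_hg n r q \<sigma>"
  let ?Hs = "sigma_hg n (r div d) m (image_mset (\<lambda>a. a div d) \<sigma>)"
  have "finite M" using mM fin_hg finite_subset unfolding matching_def by blast
  then show ?thesis using mM
  proof (induction M rule: finite_induct)
    case empty
    then show ?case by (intro exI[of _ "{}"]) (auto simp: matching_def)
  next
    case (insert K M)
    from insert.prems have mM: "matching ?H M" by (rule matching_insert)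
    from insert.IH[OF this] obtain Ms where
      Ms: "matching ?Hs Ms" "card Ms = card M"
          "\<forall>K'\<in>Ms. \<forall>(i,j)\<in>K'. j < card (\<Union>M \<inter> sclass q i) div d" by blast
    have KH: "K \<in> ?H" using insert.prems unfolding matching_def by auto
    have MH: "M \<subseteq> ?H" using mM unfolding matching_def by auto
    have Kdisj: "K \<inter> \<Union>M = {}"
      using insert.prems insert.hyps(2) by (rule matching_disj)
    have finK: "finite K" using KH unfolding sigma_hg_def sverts_def
      by (auto intro: finite_subset)
    have finUM: "finite (\<Union>M)" using MH insert.hyps(1) unfolding sigma_hg_def sverts_def
      by (auto intro: finite_subset)
    define U where "U i = card (\<Union>M \<inter> sclass q i) div d" for i
    define c where "c i = card (K \<inter> sclass q i) div d" for i
    define Ks where "Ks = {(i,j). i < n \<and> U i \<le> j \<and> j < U i + c i}"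
    have Unew: "card (\<Union>(insert K M) \<inter> sclass q i) div d = U i + c i" for i
    proof -
      have "\<Union>(insert K M) \<inter> sclass q i = (K \<inter> sclass q i) \<union> (\<Union>M \<inter> sclass q i)" by auto
      then have "card (\<Union>(insert K M) \<inter> sclass q i) = card (K \<inter> sclass q i) + card (\<Union>M \<inter> sclass q i)"
        using Kdisj finK finUM by (simp add: card_Un_disjoint disjoint_iff)
      then show ?thesis unfolding U_def c_def
        using dvd_cls[OF KH dv] by (simp add: div_plus_div_distrib_dvd_left)
    qed
    have bound: "U i + c i \<le> m" for i
    proof -
      have "\<Union>(insert K M) \<inter> sclass q i \<subseteq> sclass q i" by auto
      then have "card (\<Union>(insert K M) \<inter> sclass q i) \<le> q"
      proof -
        have "card (\<Union>(insert K M) \<inter> sclass q i) \<le> card (sclass q i)"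
          by (rule card_mono) (auto simp: sclass_def)
        also have "\<dots> = q" by (simp add: sclass_def card_cartesian_product)
        finally show ?thesis .
      qed
      then have "card (\<Union>(insert K M) \<inter> sclass q i) div d \<le> q div d" by (rule div_le_mono)
      also have "q div d \<le> m" using less_mult_imp_div_less[OF qb] by simp
      finally show ?thesis using Unew by simp
    qed
    have Ks_cls: "Ks \<inter> sclass m i = (if i < n then {i} \<times> {U i..<U i + c i} else {})" for i
      using bound[of i] unfolding Ks_def sclass_def by auto
    have Ks_sub: "Ks \<subseteq> sverts n m"
    proof
      fix x assume "x \<in> Ks"
      then obtain i j where "x = (i,j)" "i < n" "j < U i + c i" unfolding Ks_def by auto
      then show "x \<in> sverts n m" using bound[of i] unfolding sverts_def by auto
    qed
    have prof: "profile n m Ks = image_mset (\<lambda>a. a div d) \<sigma>"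
    proof -
      have "profile n m Ks = filter_mset (\<lambda>k. k\<noteq>0) (image_mset (\<lambda>i. card (K \<inter> sclass q i) div d) (mset_set {..<n}))"
        unfolding profile_def
        by (intro arg_cong[where f="filter_mset _"] image_mset_cong) (auto simp: Ks_cls c_def)
      also have "\<dots> = image_mset (\<lambda>a. a div d) (profile n q K)"
        unfolding profile_def using dvd_cls[OF KH dv] dpos by (subst filter_div) auto
      also have "\<dots> = image_mset (\<lambda>a. a div d) \<sigma>" using KH unfolding sigma_hg_def by auto
      finally show ?thesis .
    qed
    have cardKs: "card Ks = r div d"
      using card_profile[OF Ks_sub] prof sum_div[OF dpos dv] rs by simp
    have KsHs: "Ks \<in> ?Hs" unfolding sigma_hg_def using Ks_sub cardKs prof by auto
    have Ks_dis: "Ks \<inter> K' = {}" if "K' \<in> Ms" for K'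
    proof -
      have "\<forall>(i,j)\<in>K'. j < U i" using Ms(3) that unfolding U_def by blast
      then show ?thesis unfolding Ks_def by auto
    qed
    have Ks_ne: "Ks \<noteq> {}" using cardKs rpos by auto
    have Ks_notin: "Ks \<notin> Ms" using Ks_dis Ks_ne by blast
    have finMs: "finite Ms" using Ms(1) fin_hg finite_subset unfolding matching_def by blast
    show ?case
    proof (intro exI[of _ "insert Ks Ms"] conjI)
      show "matching ?Hs (insert Ks Ms)"
        using Ms(1) KsHs Ks_dis by (intro matching_insertI) auto
      show "card (insert Ks Ms) = card (insert K M)"
        using Ks_notin finMs Ms(2) insert.hyps by simp
      show "\<forall>K'\<in>insert Ks Ms. \<forall>(i, j)\<in>K'. j < card (\<Union>(insert K M) \<inter> sclass q i) div d"
      proof -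
        have "\<forall>K'\<in>Ms. \<forall>(i,j)\<in>K'. j < U i" using Ms(3) unfolding U_def by blast
        then have "\<forall>K'\<in>insert Ks Ms. \<forall>(i,j)\<in>K'. j < U i + c i"
          unfolding Ks_def by fastforce
        then show ?thesis unfolding Unew .
      qed
    qed
  qed
qed


definition blow :: "nat \<Rightarrow> (nat \<times> nat) set \<Rightarrow> (nat \<times> nat) set" where
  "blow d A = (\<lambda>((i,j),l). (i, j*d+l)) ` (A \<times> {..<d})"

lemma g_inj: assumes "(d::nat) > 0" "l < d" "l' < d" "j*d+l = j'*d+l'"
  shows "j = j' \<and> l = l'"
proof
  have "j = (j*d+l) div d" using assms(1,2) by simp
  also have "\<dots> = (j'*d+l') div d" using assms(4) by simp
  also have "\<dots> = j'" using assms(1,3) by simp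
  finally show "j = j'" .
next
  have "l = (j*d+l) mod d" using assms(1,2) by simp
  also have "\<dots> = (j'*d+l') mod d" using assms(4) by simp
  also have "\<dots> = l'" using assms(1,3) by simp
  finally show "l = l'" .
qed

lemma blow_mem: "x \<in> blow d A \<longleftrightarrow> (\<exists>i j l. (i,j) \<in> A \<and> l < d \<and> x = (i, j*d+l))"
proof
  assume "x \<in> blow d A"
  then obtain p l where "p \<in> A" "l < d" "x = (\<lambda>((i,j),l). (i, j*d+l)) (p,l)"
    unfolding blow_def by blast
  then show "\<exists>i j l. (i,j) \<in> A \<and> l < d \<and> x = (i, j*d+l)" by (cases p) auto
next
  assume "\<exists>i j l. (i,j) \<in> A \<and> l < d \<and> x = (i, j*d+l)"
  then obtain i j l where "(i,j) \<in> A" "l < d" "x = (i, j*d+l)" by blast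
  then have "x = (\<lambda>((i,j),l). (i, j*d+l)) ((i,j),l)" "((i,j),l) \<in> A \<times> {..<d}" by auto
  then show "x \<in> blow d A" unfolding blow_def by blast
qed

lemma inj_on_g: assumes "(d::nat) > 0" shows "inj_on (\<lambda>((i,j),l). (i, j*d+l)) (A \<times> {..<d})"
proof (rule inj_onI)
  fix x y assume h: "x \<in> A \<times> {..<d}" "y \<in> A \<times> {..<d}"
    "(\<lambda>((i,j),l). (i, j*d+l)) x = (\<lambda>((i,j),l). (i, j*d+l)) y"
  obtain i j l where x: "x = ((i,j),l)" by (metis prod.exhaust)
  obtain i' j' l' where y: "y = ((i',j'),l')" by (metis prod.exhaust)
  have "l < d" "l' < d" using h(1,2) unfolding x y by auto
  moreover have "i = i'" "j*d+l = j'*d+l'" using h(3) unfolding x y by auto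
  ultimately show "x = y" using g_inj[OF assms, of l l' j j'] unfolding x y by simp
qed

lemma card_blow: "(d::nat) > 0 \<Longrightarrow> finite A \<Longrightarrow> card (blow d A) = d * card A"
  unfolding blow_def by (subst card_image[OF inj_on_g]) (auto simp: card_cartesian_product)

lemma blow_disj: assumes "(d::nat) > 0" "A \<inter> B = {}" shows "blow d A \<inter> blow d B = {}"
proof (rule ccontr)
  assume "blow d A \<inter> blow d B \<noteq> {}"
  then obtain x where "x \<in> blow d A" "x \<in> blow d B" by blast
  then obtain i j l i' j' l' where h: "(i,j) \<in> A" "l < d" "x = (i, j*d+l)"
     "(i',j') \<in> B" "l' < d" "x = (i', j'*d+l')" unfolding blow_mem by metis
  then have "i = i'" "j*d+l = j'*d+l'" by auto
  then have "j = j'" using g_inj[OF assms(1) h(2) h(5)] by blast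
  then show False using h assms(2) \<open>i = i'\<close> by blast
qed


lemma blow_inj: assumes "(d::nat) > 0" shows "inj (blow d)"
proof (rule injI)
  fix A B assume eq: "blow d A = blow d B"
  have "A \<subseteq> B" if "blow d A = blow d B" for A B
  proof
    fix x assume "x \<in> A"
    obtain i j where x: "x = (i,j)" by force
    have "(i, j*d+0) \<in> blow d A" using \<open>x \<in> A\<close> x assms unfolding blow_mem by blast
    then have "(i, j*d+0) \<in> blow d B" using that by simp
    then obtain j' l where "(i,j') \<in> B" "l < d" "j*d+0 = j'*d+l" unfolding blow_mem by auto
    then show "x \<in> B" using g_inj[OF assms _ \<open>l<d\<close>, of 0 j j'] x assms by auto
  qed
  then show "A = B" using eq by (metis subset_antisym)
qed

lemma blow_cls:
  assumes "A \<subseteq> sverts n m" "(d::nat) > 0"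
  shows "blow d A \<inter> sclass (m*d) i = blow d (A \<inter> sclass m i)"
proof -
  have "j*d+l < m*d" if "j < m" "l < d" for j l
  proof -
    have "j*d + l < j*d + d" using that by simp
    also have "\<dots> = Suc j * d" by simp
    also have "\<dots> \<le> m * d" using that by (intro mult_right_mono) auto
    finally show ?thesis .
  qed
  note bnd = this
  show ?thesis
  proof (rule set_eqI)
    fix x
    show "x \<in> blow d A \<inter> sclass (m*d) i \<longleftrightarrow> x \<in> blow d (A \<inter> sclass m i)"
      unfolding Int_iff blow_mem sclass_def using assms(1) bnd unfolding sverts_def by blast
  qed
qed

lemma blow_sub:
  assumes "A \<subseteq> sverts n m" "(d::nat) > 0"
  shows "blow d A \<subseteq> sverts n (m*d)"
proof -
  have "j*d+l < m*d" if "j < m" "l < d" for j l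
  proof -
    have "j*d + l < j*d + d" using that by simp
    also have "\<dots> = Suc j * d" by simp
    also have "\<dots> \<le> m * d" using that by (intro mult_right_mono) auto
    finally show ?thesis .
  qed
  note bnd = this
  show ?thesis
  proof
    fix x assume "x \<in> blow d A"
    then obtain i j l where "(i,j) \<in> A" "l < d" "x = (i, j*d+l)" unfolding blow_mem by blast
    then show "x \<in> sverts n (m*d)" using assms(1) bnd unfolding sverts_def by auto
  qed
qed

lemma partB:
  assumes dpos: "d > 0" and dv: "\<forall>a\<in>#\<sigma>. d dvd a" and rs: "sum_mset \<sigma> = r"
    and mMs: "matching (sigma_hg n (r div d) m (image_mset (\<lambda>a. a div d) \<sigma>)) Ms"
  shows "matching (sigma_hg n r (m*d) \<sigma>) (blow d ` Ms) \<and> card (blow d ` Ms) = card Ms"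
proof
  let ?Hs = "sigma_hg n (r div d) m (image_mset (\<lambda>a. a div d) \<sigma>)"
  show "card (blow d ` Ms) = card Ms"
    using blow_inj[OF dpos] by (simp add: card_image inj_on_subset)
  have edge: "blow d K \<in> sigma_hg n r (m*d) \<sigma>" if "K \<in> ?Hs" for K
  proof -
    have Ks: "K \<subseteq> sverts n m" using that unfolding sigma_hg_def by auto
    have finK: "finite K" using Ks finite_subset unfolding sverts_def by blast
    have sub: "blow d K \<subseteq> sverts n (m*d)" by (rule blow_sub[OF Ks dpos])
    have "profile n (m*d) (blow d K) = filter_mset (\<lambda>k. k\<noteq>0)
        (image_mset (\<lambda>i. d * card (K \<inter> sclass m i)) (mset_set {..<n}))"
      unfolding profile_def blow_cls[OF Ks dpos]
      using finK by (simp add: card_blow[OF dpos])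
    also have "\<dots> = image_mset (\<lambda>k. d*k) (profile n m K)"
      unfolding profile_def by (rule filter_mult[OF dpos])
    also have "\<dots> = image_mset (\<lambda>k. d*k) (image_mset (\<lambda>a. a div d) \<sigma>)"
      using that unfolding sigma_hg_def by auto
    also have "\<dots> = \<sigma>" unfolding multiset.map_comp o_def
      using dv by (induction \<sigma>) auto
    finally have prof: "profile n (m*d) (blow d K) = \<sigma>" .
    have "card (blow d K) = r" using card_profile[OF sub] prof rs by simp
    then show ?thesis using sub prof unfolding sigma_hg_def by auto
  qed
  show "matching (sigma_hg n r (m*d) \<sigma>) (blow d ` Ms)"
    unfolding matching_def
  proof
    show "blow d ` Ms \<subseteq> sigma_hg n r (m * d) \<sigma>" using mMs edge unfolding matching_def by auto
    show "disjoint (blow d ` Ms)"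
      unfolding disjoint_def
    proof (intro ballI impI)
      fix a b assume "a \<in> blow d ` Ms" "b \<in> blow d ` Ms" "a \<noteq> b"
      then obtain A B where "A \<in> Ms" "B \<in> Ms" "a = blow d A" "b = blow d B" "A \<noteq> B" by auto
      then have "A \<inter> B = {}" using mMs unfolding matching_def disjoint_def by auto
      then show "a \<inter> b = {}" using blow_disj[OF dpos] \<open>a = _\<close> \<open>b = _\<close> by auto
    qed
  qed
qed


lemma fin_matchings: "finite E \<Longrightarrow> finite {M. matching E M}"
  by (rule finite_subset[of _ "Pow E"]) (auto simp: matching_def)

lemma empty_matching: "matching E {}"
  by (simp add: matching_def)

lemma nu_le:
  assumes "finite E" "finite E'" "\<forall>M. matching E M \<longrightarrow> (\<exists>M'. matching E' M' \<and> card M' = card M)"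
  shows "nu E \<le> nu E'"
proof -
  have "nu E \<in> card ` {M. matching E M}" unfolding nu_def
    using fin_matchings[OF assms(1)] empty_matching by (intro Max_in) auto
  then obtain M where "matching E M" "card M = nu E" by auto
  then obtain M' where "matching E' M'" "card M' = nu E" using assms(3) by metis
  then show ?thesis unfolding nu_def using fin_matchings[OF assms(2)]
    by (metis (mono_tags, lifting) Max_ge finite_imageI image_eqI mem_Collect_eq)
qed

lemma hm_sub:
  assumes "m*d \<le> q"
  shows "sigma_hg n r (m*d) \<sigma> \<subseteq> sigma_hg n r q \<sigma>"
proof
  fix K assume K: "K \<in> sigma_hg n r (m*d) \<sigma>"
  then have Ks: "K \<subseteq> sverts n (m*d)" unfolding sigma_hg_def by auto
  have "K \<inter> sclass q i = K \<inter> sclass (m*d) i" for i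
    using Ks assms unfolding sverts_def sclass_def by auto
  then have "profile n q K = profile n (m*d) K" unfolding profile_def by simp
  moreover have "K \<subseteq> sverts n q" using Ks assms unfolding sverts_def by auto
  ultimately show "K \<in> sigma_hg n r q \<sigma>" using K unfolding sigma_hg_def by auto
qed

lemma matching_mono: "E \<subseteq> E' \<Longrightarrow> matching E M \<Longrightarrow> matching E' M"
  unfolding matching_def by auto

theorem lemma3p5:
  fixes n r q m t d :: nat and \<sigma> :: "nat multiset"
  assumes "is_partition \<sigma> r"
    and "d = Gcd (set_mset \<sigma>)" and "d \<ge> 2"
    and "q = m * d + t" and "t \<le> d - 1"
  defines "H \<equiv> sigma_hg n r q \<sigma>"
    and "Hm \<equiv> sigma_hg n r (m * d) \<sigma>"
    and "Hs \<equiv> sigma_hg n (r div d) m (image_mset (\<lambda>a. a div d) \<sigma>)"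
  shows "(\<forall>M. max_matching H M \<longrightarrow> (\<exists>Ms. matching Hs Ms \<and> card Ms = card M))
       \<and> (\<forall>Ms. max_matching Hs Ms \<longrightarrow> (\<exists>M. matching H M \<and> card M = card Ms))
       \<and> nu H = nu Hm \<and> nu Hm = nu Hs"
proof -
  have rs: "sum_mset \<sigma> = r" and pos: "\<forall>a\<in>#\<sigma>. a > 0"
    using assms(1) unfolding is_partition_def by auto
  have dpos: "d > 0" using assms(3) by simp
  have dv: "\<forall>a\<in>#\<sigma>. d dvd a" using assms(2) by (simp add: Gcd_dvd)
  have ne: "\<sigma> \<noteq> {#}" using assms(2,3) by auto
  then obtain a where a: "a \<in># \<sigma>" by blast
  have "d \<le> a" using dv a pos by (meson dvd_imp_le)
  also have "a \<le> r" using rs a by (metis le_add1 sum_mset.remove)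
  finally have "d \<le> r" .
  then have rpos: "r div d > 0" using dpos by (simp add: div_greater_zero_iff)
  have qb: "q < Suc m * d" using assms(3,4,5) by simp
  have mdq: "m * d \<le> q" using assms(4) by simp
  have HmH: "Hm \<subseteq> H" unfolding H_def Hm_def by (rule hm_sub[OF mdq])
  have A: "\<exists>Ms. matching Hs Ms \<and> card Ms = card M" if "matching H M" for M
    using partA[OF dpos dv qb rpos rs, of n M] that unfolding H_def Hs_def by blast
  have B: "\<exists>M. matching Hm M \<and> card M = card Ms" if "matching Hs Ms" for Ms
    using partB[OF dpos dv rs, of n m Ms] that unfolding Hm_def Hs_def by blast
  have B': "\<exists>M. matching H M \<and> card M = card Ms" if "matching Hs Ms" for Ms
    using B[OF that] matching_mono[OF HmH] by blast
  have fH: "finite H" "finite Hm" "finite Hs" unfolding H_def Hm_def Hs_def by (rule fin_hg)+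
  have "nu Hm \<le> nu H" using nu_le[OF fH(2) fH(1)] matching_mono[OF HmH] by blast
  moreover have "nu H \<le> nu Hs" using nu_le[OF fH(1) fH(3)] A by blast
  moreover have "nu Hs \<le> nu Hm" using nu_le[OF fH(3) fH(2)] B by blast
  ultimately show ?thesis using A B' unfolding max_matching_def by auto
qed

end
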